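(* For all $m\in\mathbb{N}$, $\delta\in(0,1)$ and $\boldsymbol{\mu}\in\Delta_\mathbb{N}$, if $\boldsymbol{X}=(X_1,\dots,X_m)\sim\boldsymbol{\mu}^m$ and $\widehat{\boldsymbol{\mu}}_m$ is its empirical measure, then with probability at least $1-\delta$, $$\|\widehat{\boldsymbol{\mu}}_m-\boldsymbol{\mu}\|_{TV}\ge \frac{1}{4\sqrt2}\Phi_m(\widehat{\boldsymbol{\mu}}_m)-3\sqrt{\frac{\log(2/\delta)}{m}}.$$
   Context: $\Delta_\mathbb{N}$ is the set of probability distributions on $\mathbb{N}=\{1,2,\dots\}$. For $\boldsymbol{X}=(X_1,\dots,X_m)$ i.i.d. from $\boldsymbol{\mu}$, the empirical measure is $\widehat{\boldsymbol{\mu}}_m(i)=\frac1m\sum_{t=1}^m\mathbb{I}\{X_t=i\}$. $\|\boldsymbol{\mu}-\boldsymbol{\nu}\|_{TV}=\frac12\sum_{i}|\boldsymbol{\mu}(i)-\boldsymbol{\nu}(i)|$. $\Phi_m(\widehat{\boldsymbol{\mu}}_m):=\frac1{\sqrt m}\sum_{j\in\mathbb{N}}\sqrt{\widehat{\boldsymbol{\mu}}_m(j)}$. $\log$ is the natural logarithm. *)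

theory Defs
  imports "HOL-Probability.Probability"
begin

definition emp_measure :: "nat \<Rightarrow> nat list \<Rightarrow> nat \<Rightarrow> real" where
  "emp_measure m xs i = real (count_list xs i) / real m"

definition tv_dist :: "(nat \<Rightarrow> real) \<Rightarrow> (nat \<Rightarrow> real) \<Rightarrow> real" where
  "tv_dist p q = (1/2) * (\<Sum>\<^sub>\<infinity>i\<in>UNIV. \<bar>p i - q i\<bar>)"

definition Phi :: "nat \<Rightarrow> (nat \<Rightarrow> real) \<Rightarrow> real" where
  "Phi m nu = (1 / sqrt (real m)) * (\<Sum>\<^sub>\<infinity>j\<in>UNIV. sqrt (nu j))"

end

theory Submission
  imports Defs
begin


lemma integrable_pmf_bdd:
  fixes f :: "'a \<Rightarrow> real"
  assumes "\<And>x. x \<in> set_pmf p \<Longrightarrow> \<bar>f x\<bar> \<le> B"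
  shows "integrable (measure_pmf p) f"
  by (rule measure_pmf.integrable_const_bound[where B=B]) (auto simp: AE_measure_pmf_iff assms)

lemma integral_bind_pmf_bdd:
  fixes f :: "'b \<Rightarrow> real"
  assumes B: "\<And>y. y \<in> set_pmf (bind_pmf p q) \<Longrightarrow> \<bar>f y\<bar> \<le> B"
  shows "measure_pmf.expectation (bind_pmf p q) f =
         measure_pmf.expectation p (\<lambda>x. measure_pmf.expectation (q x) f)"
proof -
  define g where "g y = max (-\<bar>B\<bar>) (min \<bar>B\<bar> (f y))" for y
  have gf: "g y = f y" if "y \<in> set_pmf (bind_pmf p q)" for y
    using B[OF that] by (auto simp: g_def)
  have "measure_pmf.expectation (bind_pmf p q) f = measure_pmf.expectation (bind_pmf p q) g"
    by (intro integral_cong_AE) (auto simp: AE_measure_pmf_iff gf)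
  also have "\<dots> = \<integral>x. measure_pmf.expectation (q x) g \<partial>measure_pmf p"
    unfolding measure_pmf_bind
    by (rule integral_bind[where K="count_space UNIV" and B="\<bar>B\<bar>" and B'=1])
       (auto simp: g_def measure_pmf.emeasure_space_1 measure_pmf_in_subprob_algebra intro!: measure_pmf.finite_measure)
  also have "\<dots> = measure_pmf.expectation p (\<lambda>x. measure_pmf.expectation (q x) f)"
  proof (intro integral_cong_AE)
    show "AE x in measure_pmf p. measure_pmf.expectation (q x) g = measure_pmf.expectation (q x) f"
      unfolding AE_measure_pmf_iff
    proof
      fix x assume x: "x \<in> set_pmf p"
      show "measure_pmf.expectation (q x) g = measure_pmf.expectation (q x) f"
        by (intro integral_cong_AE) (auto simp: AE_measure_pmf_iff intro!: gf x)
    qed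
  qed auto
  finally show ?thesis .
qed

lemma expectation_replicate_Suc:
  fixes f :: "'a list \<Rightarrow> real"
  assumes "\<And>xs. length xs = Suc n \<Longrightarrow> \<bar>f xs\<bar> \<le> B"
  shows "measure_pmf.expectation (replicate_pmf (Suc n) p) f =
         measure_pmf.expectation p (\<lambda>x. measure_pmf.expectation (replicate_pmf n p) (\<lambda>xs. f (x#xs)))"
proof -
  have "replicate_pmf (Suc n) p = bind_pmf p (\<lambda>x. map_pmf ((#) x) (replicate_pmf n p))"
    by (simp add: map_pmf_def)
  also have "measure_pmf.expectation \<dots> f =
     measure_pmf.expectation p (\<lambda>x. measure_pmf.expectation (map_pmf ((#) x) (replicate_pmf n p)) f)"
    by (rule integral_bind_pmf_bdd[where B=B]) (auto simp: set_replicate_pmf assms)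
  finally show ?thesis by simp
qed


definition BD :: "nat \<Rightarrow> real \<Rightarrow> ('a list \<Rightarrow> real) \<Rightarrow> bool" where
  "BD n c f \<longleftrightarrow> (\<forall>xs i y. length xs = n \<longrightarrow> i < n \<longrightarrow> \<bar>f (xs[i:=y]) - f xs\<bar> \<le> c)"

lemma BD_Cons: "BD (Suc n) c f \<Longrightarrow> BD n c (\<lambda>xs. f (x#xs))"
  unfolding BD_def
proof (intro allI impI)
  fix xs i y assume a: "\<forall>xs i y. length xs = Suc n \<longrightarrow> i < Suc n \<longrightarrow> \<bar>f (xs[i := y]) - f xs\<bar> \<le> c"
    and "length (xs::'a list) = n" "i < n"
  then show "\<bar>f (x # xs[i := y]) - f (x # xs)\<bar> \<le> c"
    using a[rule_format, of "x#xs" "Suc i" y] by simp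
qed

lemma BD_head: "BD (Suc n) c f \<Longrightarrow> length xs = n \<Longrightarrow> \<bar>f (x#xs) - f (y#xs)\<bar> \<le> c"
  unfolding BD_def by (drule spec[of _ "y#xs"], drule spec[of _ 0], drule spec[of _ x]) simp

lemma BD_neg: "BD n c f \<Longrightarrow> BD n c (\<lambda>xs. - f xs)"
  unfolding BD_def by (metis abs_minus_commute minus_diff_eq minus_diff_minus)

lemma BD_diff: "BD n c f \<Longrightarrow> length xs = n \<Longrightarrow> length ys = n \<Longrightarrow> \<bar>f xs - f ys\<bar> \<le> real n * c"
proof (induction n arbitrary: f xs ys)
  case 0 then show ?case by simp
next
  case (Suc n)
  obtain x xs' where xs: "xs = x # xs'" using Suc.prems by (cases xs) auto
  obtain y ys' where ys: "ys = y # ys'" using Suc.prems by (cases ys) auto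
  have l: "length xs' = n" "length ys' = n" using Suc.prems xs ys by auto
  have 1: "\<bar>f (x#xs') - f (y#xs')\<bar> \<le> c" by (rule BD_head[OF Suc.prems(1) l(1)])
  have 2: "\<bar>f (y#xs') - f (y#ys')\<bar> \<le> real n * c"
    using Suc.IH[OF BD_Cons[OF Suc.prems(1)] l] .
  show ?case using 1 2 xs ys by (simp add: algebra_simps)
qed

lemma BD_bounded:
  assumes "BD n c f"
  shows "\<exists>B. \<forall>xs. length xs = n \<longrightarrow> \<bar>f xs\<bar> \<le> B"
proof -
  define r :: "'a list" where "r = replicate n undefined"
  have "\<bar>f xs\<bar> \<le> \<bar>f r\<bar> + real n * c" if "length xs = n" for xs
    using BD_diff[OF assms that, of r] by (simp add: r_def)
  then show ?thesis by blast
qed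

lemma expectation_bounded:
  fixes f :: "'a \<Rightarrow> real"
  assumes "\<And>x. x \<in> set_pmf p \<Longrightarrow> \<bar>f x\<bar> \<le> B"
  shows "\<bar>measure_pmf.expectation p f\<bar> \<le> B"
proof -
  have "\<bar>measure_pmf.expectation p f\<bar> \<le> measure_pmf.expectation p (\<lambda>x. \<bar>f x\<bar>)"
    using integral_norm_bound[of "measure_pmf p" f] by simp
  also have "\<dots> \<le> measure_pmf.expectation p (\<lambda>x. B)"
    by (intro integral_mono_AE integrable_pmf_bdd[where B=B])
       (auto simp: AE_measure_pmf_iff assms intro: order_trans[OF abs_ge_zero assms])
  finally show ?thesis by simp
qed

lemma Hoeffding_pmf:
  fixes g :: "'a \<Rightarrow> real"
  assumes "\<And>x y. x \<in> set_pmf p \<Longrightarrow> y \<in> set_pmf p \<Longrightarrow> g x - g y \<le> c" and "l > 0"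
  shows "measure_pmf.expectation p (\<lambda>x. exp (l * (g x - measure_pmf.expectation p g)))
           \<le> exp (l\<^sup>2 * c\<^sup>2 / 8)"
proof -
  define a where "a = Inf (g ` set_pmf p)"
  obtain x0 where x0: "x0 \<in> set_pmf p" using set_pmf_not_empty[of p] by blast
  have bdd: "bdd_below (g ` set_pmf p)"
    unfolding bdd_below_def using assms(1)[OF x0] by (intro exI[of _ "g x0 - c"]) (auto simp: algebra_simps)
  have lo: "a \<le> g x" if "x \<in> set_pmf p" for x
    unfolding a_def using bdd that by (intro cInf_lower) auto
  have hi: "g x \<le> a + c" if "x \<in> set_pmf p" for x
  proof -
    have "g x - c \<le> a" unfolding a_def
      using x0 assms(1)[OF that] by (intro cInf_greatest) (auto simp: algebra_simps)
    then show ?thesis by simp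
  qed
  interpret I: interval_bounded_random_variable "measure_pmf p" g a "a + c"
    by unfold_locales (auto simp: AE_measure_pmf_iff lo hi)
  have bnd: "\<bar>exp (l * (g x - measure_pmf.expectation p g))\<bar> \<le> exp (l * (\<bar>a\<bar> + \<bar>c\<bar> + \<bar>measure_pmf.expectation p g\<bar>))"
    if "x \<in> set_pmf p" for x
    using lo[OF that] hi[OF that] \<open>l > 0\<close> by (auto intro!: mult_left_mono)
  have int: "integrable (measure_pmf p) (\<lambda>x. exp (l * (g x - measure_pmf.expectation p g)))"
    by (rule integrable_pmf_bdd[OF bnd])
  have "ennreal (measure_pmf.expectation p (\<lambda>x. exp (l * (g x - measure_pmf.expectation p g))))
        = nn_integral (measure_pmf p) (\<lambda>x. exp (l * (g x - measure_pmf.expectation p g)))"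
    by (rule nn_integral_eq_integral[symmetric]) (use int in auto)
  also have "\<dots> \<le> ennreal (exp (l\<^sup>2 * (a + c - a)\<^sup>2 / 8))"
    by (rule I.Hoeffdings_lemma_nn_integral) (use \<open>l > 0\<close> in auto)
  finally show ?thesis by (simp add: ennreal_le_iff)
qed


abbreviation EE where "EE p f \<equiv> measure_pmf.expectation p f"

lemma mcd_mgf:
  fixes f :: "'a list \<Rightarrow> real"
  assumes "BD n c f" "l > 0"
  shows "EE (replicate_pmf n p) (\<lambda>xs. exp (l * (f xs - EE (replicate_pmf n p) f)))
           \<le> exp (l\<^sup>2 * real n * c\<^sup>2 / 8)"
  using assms(1)
proof (induction n arbitrary: f)
  case 0 then show ?case by simp
next
  case (Suc n)
  obtain B where B: "\<And>xs. length xs = Suc n \<Longrightarrow> \<bar>f xs\<bar> \<le> B"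
    using BD_bounded[OF Suc.prems] by blast
  define g where "g x = EE (replicate_pmf n p) (\<lambda>xs. f (x#xs))" for x
  define E where "E = EE (replicate_pmf (Suc n) p) f"
  have E: "E = EE p g" unfolding E_def g_def by (rule expectation_replicate_Suc[OF B])
  have gB: "\<bar>g x\<bar> \<le> B" for x unfolding g_def
    by (rule expectation_bounded) (auto simp: set_replicate_pmf B)
  have EB: "\<bar>E\<bar> \<le> B" unfolding E_def
    by (rule expectation_bounded) (auto simp: set_replicate_pmf B)
  have gdiff: "g x - g y \<le> c" for x y
  proof -
    have i1: "integrable (measure_pmf (replicate_pmf n p)) (\<lambda>xs. f (z#xs))" for z
      by (rule integrable_pmf_bdd[where B=B]) (auto simp: set_replicate_pmf B)
    have "g x = EE (replicate_pmf n p) (\<lambda>xs. f (x#xs))" by (simp add: g_def)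
    also have "\<dots> \<le> EE (replicate_pmf n p) (\<lambda>xs. f (y#xs) + c)"
      using BD_head[OF Suc.prems]
      by (intro integral_mono_AE i1 Bochner_Integration.integrable_add)
         (auto simp: AE_measure_pmf_iff set_replicate_pmf abs_le_iff algebra_simps)
    also have "\<dots> = g y + c" unfolding g_def
      by (subst Bochner_Integration.integral_add) (auto intro: i1)
    finally show ?thesis by simp
  qed
  have IH: "EE (replicate_pmf n p) (\<lambda>xs. exp (l * (f (x#xs) - g x))) \<le> exp (l\<^sup>2 * real n * c\<^sup>2 / 8)" for x
    using Suc.IH[OF BD_Cons[OF Suc.prems, of x]] by (simp add: g_def)
  have "EE (replicate_pmf (Suc n) p) (\<lambda>xs. exp (l * (f xs - E)))
     = EE p (\<lambda>x. EE (replicate_pmf n p) (\<lambda>xs. exp (l * (f (x#xs) - E))))"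
    by (rule expectation_replicate_Suc[where B="exp (l * (B + \<bar>E\<bar>))"])
       (use B \<open>l > 0\<close> in \<open>auto intro!: mult_left_mono simp: abs_le_iff; smt (verit)\<close>)
  also have "\<dots> = EE p (\<lambda>x. exp (l * (g x - E)) * EE (replicate_pmf n p) (\<lambda>xs. exp (l * (f (x#xs) - g x))))"
  proof (intro Bochner_Integration.integral_cong refl)
    fix x
    have "(\<lambda>xs. exp (l * (f (x#xs) - E))) = (\<lambda>xs. exp (l * (g x - E)) * exp (l * (f (x#xs) - g x)))"
      by (auto simp: algebra_simps simp flip: exp_add)
    then show "EE (replicate_pmf n p) (\<lambda>xs. exp (l * (f (x#xs) - E))) =
        exp (l * (g x - E)) * EE (replicate_pmf n p) (\<lambda>xs. exp (l * (f (x#xs) - g x)))"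
      by simp
  qed
  also have "\<dots> \<le> EE p (\<lambda>x. exp (l * (g x - E)) * exp (l\<^sup>2 * real n * c\<^sup>2 / 8))"
  proof (rule integral_mono)
    show "integrable (measure_pmf p) (\<lambda>x. exp (l * (g x - E)) * exp (l\<^sup>2 * real n * c\<^sup>2 / 8))"
      by (rule integrable_pmf_bdd[where B="exp (l * (B + B)) * exp (l\<^sup>2 * real n * c\<^sup>2 / 8)"])
         (use gB EB \<open>l > 0\<close> in \<open>auto intro!: mult_left_mono; smt (verit) gB\<close>)
    show "integrable (measure_pmf p) (\<lambda>x. exp (l * (g x - E)) * EE (replicate_pmf n p) (\<lambda>xs. exp (l * (f (x#xs) - g x))))"
    proof (rule integrable_pmf_bdd[where B="exp (l * (B + B)) * exp (l\<^sup>2 * real n * c\<^sup>2 / 8)"])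
      fix x
      have "EE (replicate_pmf n p) (\<lambda>xs. exp (l * (f (x#xs) - g x))) \<ge> 0"
        by (rule integral_nonneg_AE) auto
      moreover have "exp (l * (g x - E)) \<le> exp (l * (B + B))"
        using gB[of x] EB \<open>l > 0\<close> by (auto intro!: mult_left_mono simp: abs_le_iff)
      ultimately show "\<bar>exp (l * (g x - E)) * EE (replicate_pmf n p) (\<lambda>xs. exp (l * (f (x#xs) - g x)))\<bar>
          \<le> exp (l * (B + B)) * exp (l\<^sup>2 * real n * c\<^sup>2 / 8)"
        using IH[of x] by (simp add: abs_mult) (intro mult_mono, auto)
    qed
    fix x show "exp (l * (g x - E)) * EE (replicate_pmf n p) (\<lambda>xs. exp (l * (f (x#xs) - g x)))
       \<le> exp (l * (g x - E)) * exp (l\<^sup>2 * real n * c\<^sup>2 / 8)"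
      using IH[of x] by (intro mult_left_mono) auto
  qed
  also have "\<dots> = EE p (\<lambda>x. exp (l * (g x - EE p g))) * exp (l\<^sup>2 * real n * c\<^sup>2 / 8)"
    by (simp add: E)
  also have "\<dots> \<le> exp (l\<^sup>2 * c\<^sup>2 / 8) * exp (l\<^sup>2 * real n * c\<^sup>2 / 8)"
    by (intro mult_right_mono Hoeffding_pmf gdiff \<open>l > 0\<close>) auto
  also have "\<dots> = exp (l\<^sup>2 * real (Suc n) * c\<^sup>2 / 8)"
    by (simp add: algebra_simps flip: exp_add)
  finally show ?case by (simp add: E_def)
qed


lemma mcd_tail:
  fixes f :: "'a list \<Rightarrow> real"
  assumes bd: "BD n c f" and n: "n > 0" and c: "c > 0" and s: "s > 0"
  shows "measure_pmf.prob (replicate_pmf n p) {xs. f xs - EE (replicate_pmf n p) f \<ge> s}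
           \<le> exp (- 2 * s\<^sup>2 / (real n * c\<^sup>2))"
proof -
  define M where "M = replicate_pmf n p"
  define E where "E = EE M f"
  define l where "l = 4 * s / (real n * c\<^sup>2)"
  have l: "l > 0" using n c s by (simp add: l_def)
  obtain B where B: "\<And>xs. length xs = n \<Longrightarrow> \<bar>f xs\<bar> \<le> B"
    using BD_bounded[OF bd] by blast
  have EB: "\<bar>E\<bar> \<le> B" unfolding E_def M_def
    by (rule expectation_bounded) (auto simp: set_replicate_pmf B)
  have int: "integrable (measure_pmf M) (\<lambda>xs. exp (l * (f xs - E)))"
  proof (rule integrable_pmf_bdd[where B="exp (l * (B + B))"])
    fix xs assume "xs \<in> set_pmf M"
    then have "\<bar>f xs\<bar> \<le> B" by (auto simp: M_def set_replicate_pmf B)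
    then have "f xs - E \<le> B + B" using EB by (simp add: abs_le_iff)
    then have "l * (f xs - E) \<le> l * (B + B)" using l by (intro mult_left_mono) auto
    then show "\<bar>exp (l * (f xs - E))\<bar> \<le> exp (l * (B + B))" by simp
  qed
  have "measure_pmf.prob M {xs. f xs - E \<ge> s} = EE M (indicator {xs. f xs - E \<ge> s})"
    by simp
  also have "\<dots> \<le> EE M (\<lambda>xs. exp (l * (f xs - E)) * exp (- l * s))"
  proof (rule integral_mono)
    show "integrable (measure_pmf M) (indicator {xs. s \<le> f xs - E} :: _ \<Rightarrow> real)"
      by (rule integrable_pmf_bdd[where B=1]) (auto simp: indicator_def)
    show "integrable (measure_pmf M) (\<lambda>xs. exp (l * (f xs - E)) * exp (- l * s))"
      using int by simp
    fix xs
    show "indicator {xs. s \<le> f xs - E} xs \<le> exp (l * (f xs - E)) * exp (- l * s)"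
    proof (cases "s \<le> f xs - E")
      case True
      then have "l * s \<le> l * (f xs - E)" using l by (intro mult_left_mono) auto
      then have "1 \<le> exp (l * (f xs - E) + - l * s)" by simp
      also have "\<dots> = exp (l * (f xs - E)) * exp (- l * s)" by (rule exp_add)
      finally show ?thesis using True by simp
    qed auto
  qed
  also have "\<dots> = EE M (\<lambda>xs. exp (l * (f xs - E))) * exp (- l * s)" by simp
  also have "\<dots> \<le> exp (l\<^sup>2 * real n * c\<^sup>2 / 8) * exp (- l * s)"
    unfolding M_def E_def by (intro mult_right_mono mcd_mgf bd l) auto
  also have "\<dots> = exp (- 2 * s\<^sup>2 / (real n * c\<^sup>2))"
    unfolding l_def using n c by (simp add: power2_eq_square field_simps flip: exp_add)
  finally show ?thesis by (simp add: M_def E_def)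
qed


lemma EE_bern:
  fixes F :: "real \<Rightarrow> real"
  shows "EE p (\<lambda>x. F (if P x then 1 else 0)) =
         measure_pmf.prob p {x. P x} * F 1 + (1 - measure_pmf.prob p {x. P x}) * F 0"
proof -
  have "(\<lambda>x. F (if P x then 1 else 0)) = (\<lambda>x. F 0 + (F 1 - F 0) * indicator {x. P x} x)"
    by (auto simp: indicator_def)
  then have "EE p (\<lambda>x. F (if P x then 1 else 0)) = EE p (\<lambda>x. F 0 + (F 1 - F 0) * indicator {x. P x} x)"
    by simp
  also have "\<dots> = F 0 + (F 1 - F 0) * measure_pmf.prob p {x. P x}"
    by (subst Bochner_Integration.integral_add) (auto intro!: integrable_pmf_bdd[where B=1])
  finally show ?thesis by (simp add: algebra_simps)
qed

definition Yc :: "('a \<Rightarrow> bool) \<Rightarrow> real \<Rightarrow> nat \<Rightarrow> 'a list \<Rightarrow> real" where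
  "Yc P pr n xs = real (length (filter P xs)) - real n * pr"

definition Mom :: "'a pmf \<Rightarrow> ('a \<Rightarrow> bool) \<Rightarrow> nat \<Rightarrow> nat \<Rightarrow> real" where
  "Mom p P N n = EE (replicate_pmf n p) (\<lambda>xs. Yc P (measure_pmf.prob p {x. P x}) n xs ^ N)"

lemma Yc_bound:
  assumes "length xs = n" "0 \<le> pr" "pr \<le> 1"
  shows "\<bar>Yc P pr n xs\<bar> \<le> real n"
proof -
  have "length (filter P xs) \<le> n" using assms by (metis length_filter_le)
  then have "real (length (filter P xs)) \<le> real n" by simp
  moreover have "real n * pr \<le> real n * 1" using assms by (intro mult_left_mono) auto
  moreover have "0 \<le> real n * pr" using assms by simp
  ultimately show ?thesis unfolding Yc_def by (simp add: abs_le_iff)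
qed

lemma Yc_Cons: "Yc P pr (Suc n) (x#xs) = Yc P pr n xs + ((if P x then 1 else 0) - pr)"
  by (simp add: Yc_def algebra_simps)

lemma Mom_rec:
  fixes p :: "'a pmf" and P :: "'a \<Rightarrow> bool"
  defines "pr \<equiv> measure_pmf.prob p {x. P x}"
  shows "Mom p P N (Suc n) = (\<Sum>k\<le>N. real (N choose k) * Mom p P k n *
            (pr * (1 - pr) ^ (N - k) + (1 - pr) * (- pr) ^ (N - k)))"
proof -
  have pr: "0 \<le> pr" "pr \<le> 1" by (auto simp: pr_def)
  have inner: "EE (replicate_pmf n p) (\<lambda>xs. (Yc P pr n xs + z) ^ N) =
     (\<Sum>k\<le>N. real (N choose k) * Mom p P k n * z ^ (N - k))" for z
  proof -
    have "EE (replicate_pmf n p) (\<lambda>xs. (Yc P pr n xs + z) ^ N) =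
          EE (replicate_pmf n p) (\<lambda>xs. \<Sum>k\<le>N. real (N choose k) * z ^ (N - k) * Yc P pr n xs ^ k)"
      by (subst binomial_ring) (simp add: algebra_simps)
    also have "\<dots> = (\<Sum>k\<le>N. real (N choose k) * z ^ (N - k) * EE (replicate_pmf n p) (\<lambda>xs. Yc P pr n xs ^ k))"
    proof (subst Bochner_Integration.integral_sum)
      fix k
      show "integrable (measure_pmf (replicate_pmf n p)) (\<lambda>xs. real (N choose k) * z ^ (N - k) * Yc P pr n xs ^ k)"
        by (intro Bochner_Integration.integrable_mult_right integrable_pmf_bdd[where B="real n ^ k"])
           (auto simp: set_replicate_pmf power_abs intro!: power_mono Yc_bound pr)
    qed simp
    finally show ?thesis by (simp add: Mom_def pr_def algebra_simps)
  qed
  have "Mom p P N (Suc n) = EE p (\<lambda>x. EE (replicate_pmf n p) (\<lambda>xs. (Yc P pr n xs + ((if P x then 1 else 0) - pr)) ^ N))"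
    unfolding Mom_def pr_def[symmetric]
    by (subst expectation_replicate_Suc[where B="real (Suc n) ^ N"])
       (auto simp: Yc_Cons power_abs intro!: power_mono, metis Yc_bound pr of_nat_Suc add.commute)
  also have "\<dots> = EE p (\<lambda>x. (\<lambda>b. \<Sum>k\<le>N. real (N choose k) * Mom p P k n * (b - pr) ^ (N - k)) (if P x then 1 else 0))"
    by (simp add: inner)
  also have "\<dots> = pr * (\<Sum>k\<le>N. real (N choose k) * Mom p P k n * (1 - pr) ^ (N - k))
               + (1 - pr) * (\<Sum>k\<le>N. real (N choose k) * Mom p P k n * (0 - pr) ^ (N - k))"
    by (subst EE_bern) (simp add: pr_def)
  also have "\<dots> = (\<Sum>k\<le>N. real (N choose k) * Mom p P k n *
            (pr * (1 - pr) ^ (N - k) + (1 - pr) * (- pr) ^ (N - k)))"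
    by (simp add: sum_distrib_left algebra_simps flip: sum.distrib)
  finally show ?thesis .
qed


lemma Mom_0: "Mom p P 0 n = 1"
  by (simp add: Mom_def)

lemma Mom_1: "Mom p P 1 n = 0"
proof (induction n)
  case 0 then show ?case by (simp add: Mom_def Yc_def)
next
  case (Suc n) then show ?case
    by (simp add: Mom_rec Mom_0 algebra_simps)
qed

lemma Mom_2: "Mom p P 2 n = real n * (measure_pmf.prob p {x. P x} * (1 - measure_pmf.prob p {x. P x}))"
proof (induction n)
  case 0 then show ?case by (simp add: Mom_def Yc_def)
next
  case (Suc n) then show ?case
    by (simp add: Mom_rec Mom_0 Mom_1 numeral_2_eq_2 atMost_Suc algebra_simps power2_eq_square)
qed

lemma Mom_4: "Mom p P 4 n \<le> real n * (measure_pmf.prob p {x. P x} * (1 - measure_pmf.prob p {x. P x}))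
     + 3 * (real n * (measure_pmf.prob p {x. P x} * (1 - measure_pmf.prob p {x. P x})))\<^sup>2"
proof (induction n)
  case 0 then show ?case by (simp add: Mom_def Yc_def)
next
  case (Suc n)
  define q where "q = measure_pmf.prob p {x. P x}"
  have q: "0 \<le> q" "q \<le> 1" by (auto simp: q_def)
  have T4: "q * (1 - q) ^ 4 + (1 - q) * q ^ 4 \<le> q * (1 - q)"
  proof -
    have "q * (1 - q) ^ 4 + (1 - q) * q ^ 4 = q * (1 - q) * ((1-q)^3 + q^3)"
      by (simp add: algebra_simps power_def numeral_eq_Suc)
    also have "\<dots> \<le> q * (1 - q) * 1"
    proof (rule mult_left_mono)
      have "(1-q)^3 \<le> (1-q)" "q^3 \<le> q" using power_decreasing[of 1 3 q] power_decreasing[of 1 3 "1-q"] q by auto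
      then show "(1-q)^3 + q^3 \<le> 1" by simp
    qed (use q in simp)
    finally show ?thesis by simp
  qed
  have rec: "Mom p P 4 (Suc n) = (q * (1 - q) ^ 4 + (1 - q) * q ^ 4) + 6 * Mom p P 2 n * (q * (1-q))
    + Mom p P 4 n"
    unfolding q_def
    by (simp add: Mom_rec Mom_0 Mom_1 Mom_1[unfolded One_nat_def] numeral_eq_Suc atMost_Suc algebra_simps power_def)
  define v where "v = q * (1 - q)"
  have e: "3 * (real (Suc n) * v)\<^sup>2 = 3 * (real n * v)\<^sup>2 + 6 * (real n * v) * v + 3 * v\<^sup>2"
    by (simp add: power2_eq_square algebra_simps)
  have v2: "0 \<le> v\<^sup>2" by simp
  show ?case
    using Suc.IH T4 unfolding rec Mom_2 q_def[symmetric] v_def[symmetric] e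
    by (simp add: algebra_simps) (use v2 in linarith)

qed


lemma abs_poly_lower:
  fixes y s :: real assumes "s > 0"
  shows "3/4 * y\<^sup>2 / s - y ^ 4 / (16 * s ^ 3) \<le> \<bar>y\<bar>"
proof -
  define t where "t = \<bar>y\<bar>"
  have t0: "t \<ge> 0" by (simp add: t_def)
  have t2: "y\<^sup>2 = t\<^sup>2" "y ^ 4 = t ^ 4" unfolding t_def by (simp_all add: power_even_abs)
  have "0 \<le> t * (t - 2 * s)^2 * (t + 4 * s)" using t0 assms by (intro mult_nonneg_nonneg) auto
  also have "t * (t - 2 * s)^2 * (t + 4 * s) = t^4 - 12 * s\<^sup>2 * t\<^sup>2 + 16 * s^3 * t"
    by algebra
  finally have 1: "12 * s\<^sup>2 * t\<^sup>2 - t^4 \<le> 16 * s^3 * t" by linarith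
  have s3: "16 * s^3 > 0" using assms by simp
  have "3/4 * t\<^sup>2 / s - t ^ 4 / (16 * s ^ 3) = (12 * s\<^sup>2 * t\<^sup>2 - t^4) / (16 * s^3)"
  proof -
    have "12 * s\<^sup>2 * t\<^sup>2 / (16 * s^3) = 3/4 * t\<^sup>2 / s"
      using assms by (simp add: power2_eq_square power3_eq_cube)
    then show ?thesis by (simp add: diff_divide_distrib)
  qed
  also have "\<dots> \<le> t" using 1 s3 by (simp add: divide_le_eq mult.commute)
  finally show ?thesis unfolding t2 t_def[symmetric] .
qed
context
  fixes p :: "'a pmf" and P :: "'a \<Rightarrow> bool" and n :: nat
begin

definition "pp = measure_pmf.prob p {x. P x}"
definition "YY xs = Yc P pp n xs"

lemma pp: "0 \<le> pp" "pp \<le> 1" by (auto simp: pp_def)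

lemma YY_int: "integrable (measure_pmf (replicate_pmf n p)) (\<lambda>xs. c * YY xs ^ k)"
  by (intro Bochner_Integration.integrable_mult_right integrable_pmf_bdd[where B="real n ^ k"])
     (auto simp: set_replicate_pmf power_abs YY_def intro!: power_mono Yc_bound pp)

lemma YY_int1: "integrable (measure_pmf (replicate_pmf n p)) YY"
  using YY_int[of 1 1] by simp

lemma EE_abs_lower:
  assumes "s > 0"
  shows "3/4 * Mom p P 2 n / s - Mom p P 4 n / (16 * s ^ 3) \<le> EE (replicate_pmf n p) (\<lambda>xs. \<bar>YY xs\<bar>)"
proof -
  have "3/4 * Mom p P 2 n / s - Mom p P 4 n / (16 * s ^ 3) =
        EE (replicate_pmf n p) (\<lambda>xs. (3/(4 * s)) * YY xs ^ 2 - (1 / (16 * s^3)) * YY xs ^ 4)"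
  proof -
    have m: "Mom p P k n = EE (replicate_pmf n p) (\<lambda>xs. YY xs ^ k)" for k
      by (simp add: Mom_def YY_def pp_def)
    show ?thesis
      unfolding m Bochner_Integration.integral_diff[OF YY_int YY_int] by simp
  qed
  also have "\<dots> \<le> EE (replicate_pmf n p) (\<lambda>xs. \<bar>YY xs\<bar>)"
  proof (rule integral_mono)
    show "integrable (measure_pmf (replicate_pmf n p)) (\<lambda>xs. 3 / (4 * s) * YY xs ^ 2 - 1 / (16 * s ^ 3) * YY xs ^ 4)"
      by (intro Bochner_Integration.integrable_diff YY_int)
    show "integrable (measure_pmf (replicate_pmf n p)) (\<lambda>xs. \<bar>YY xs\<bar>)"
      by (rule integrable_pmf_bdd[where B="real n"])
         (auto simp: set_replicate_pmf YY_def intro!: Yc_bound pp)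
    fix xs show "3 / (4 * s) * YY xs ^ 2 - 1 / (16 * s ^ 3) * YY xs ^ 4 \<le> \<bar>YY xs\<bar>"
      using abs_poly_lower[OF assms, of "YY xs"] by simp
  qed
  finally show ?thesis .
qed

lemma EE_cnt: "EE (replicate_pmf n p) (\<lambda>xs. real (length (filter P xs))) = real n * pp"
proof -
  have "EE (replicate_pmf n p) (\<lambda>xs. real (length (filter P xs))) =
        EE (replicate_pmf n p) (\<lambda>xs. YY xs + real n * pp)"
    by (simp add: YY_def Yc_def)
  also have "\<dots> = EE (replicate_pmf n p) YY + real n * pp"
    by (subst Bochner_Integration.integral_add) (auto intro!: YY_int1)
  also have "EE (replicate_pmf n p) YY = Mom p P 1 n"
    by (simp add: Mom_def YY_def[abs_def] pp_def)
  finally show ?thesis by (simp add: Mom_1[unfolded One_nat_def])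
qed

lemma EE_sqrt_le1: "EE (replicate_pmf n p) (\<lambda>xs. sqrt (real (length (filter P xs)))) \<le> real n * pp"
proof -
  have "EE (replicate_pmf n p) (\<lambda>xs. sqrt (real (length (filter P xs)))) \<le>
        EE (replicate_pmf n p) (\<lambda>xs. real (length (filter P xs)))"
  proof (rule integral_mono)
    have sq: "sqrt (real k) \<le> real k" for k
    proof (rule real_le_lsqrt)
      show "real k \<le> (real k)\<^sup>2" unfolding power2_eq_square
        by (metis of_nat_mult of_nat_le_iff le_square)
    qed simp
    show "integrable (measure_pmf (replicate_pmf n p)) (\<lambda>xs. sqrt (real (length (filter P xs))))"
    proof (rule integrable_pmf_bdd[where B="real n"])
      fix xs assume "xs \<in> set_pmf (replicate_pmf n p)"
      then have "length (filter P xs) \<le> n" by (auto simp: set_replicate_pmf intro: order_trans[OF length_filter_le])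
      then show "\<bar>sqrt (real (length (filter P xs)))\<bar> \<le> real n"
        using sq[of "length (filter P xs)"] by simp
    qed
    show "integrable (measure_pmf (replicate_pmf n p)) (\<lambda>xs. real (length (filter P xs)))"
      by (rule integrable_pmf_bdd[where B="real n"]) (auto simp: set_replicate_pmf length_filter_le)
    fix xs show "sqrt (real (length (filter P xs))) \<le> real (length (filter P xs))"
      by (rule sq)
  qed
  then show ?thesis by (simp add: EE_cnt)
qed

end


context
  fixes p :: "'a pmf" and P :: "'a \<Rightarrow> bool" and n :: nat
begin

lemma EE_sqrt_le2: "EE (replicate_pmf n p) (\<lambda>xs. sqrt (real (length (filter P xs)))) \<le> sqrt (real n * pp p P)"
proof (cases "real n * pp p P = 0")
  case True
  then show ?thesis using EE_sqrt_le1[of n p P] by (metis real_sqrt_zero)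
next
  case False
  define a where "a = real n * pp p P"
  have a: "a > 0" using False pp[of p P] by (simp add: a_def)
  have sa: "sqrt a > 0" using a by simp
  have pw: "sqrt (real k) \<le> (real k + a) / (2 * sqrt a)" for k
  proof -
    have "0 \<le> (sqrt (real k) - sqrt a)\<^sup>2" by simp
    also have "\<dots> = real k + a - 2 * sqrt (real k) * sqrt a"
      using a by (simp add: power2_eq_square algebra_simps)
    finally have "2 * sqrt a * sqrt (real k) \<le> real k + a" by (simp add: algebra_simps)
    then show ?thesis using sa by (simp add: le_divide_eq mult.commute)
  qed
  have intc: "integrable (measure_pmf (replicate_pmf n p)) (\<lambda>xs. real (length (filter P xs)))"
    by (rule integrable_pmf_bdd[where B="real n"]) (auto simp: set_replicate_pmf length_filter_le)
  have "EE (replicate_pmf n p) (\<lambda>xs. sqrt (real (length (filter P xs)))) \<le>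
        EE (replicate_pmf n p) (\<lambda>xs. (real (length (filter P xs)) + a) / (2 * sqrt a))"
  proof (rule integral_mono)
    show "integrable (measure_pmf (replicate_pmf n p)) (\<lambda>xs. sqrt (real (length (filter P xs))))"
    proof (rule integrable_pmf_bdd[where B="real n"])
      fix xs assume "xs \<in> set_pmf (replicate_pmf n p)"
      then have "length (filter P xs) \<le> n" by (auto simp: set_replicate_pmf intro: order_trans[OF length_filter_le])
      moreover have "sqrt (real k) \<le> real k" for k
      proof (rule real_le_lsqrt)
        show "real k \<le> (real k)\<^sup>2" unfolding power2_eq_square
          by (metis of_nat_mult of_nat_le_iff le_square)
      qed simp
      ultimately show "\<bar>sqrt (real (length (filter P xs)))\<bar> \<le> real n"
        by (smt (verit) of_nat_mono real_sqrt_ge_zero of_nat_0_le_iff)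
    qed
    show "integrable (measure_pmf (replicate_pmf n p)) (\<lambda>xs. (real (length (filter P xs)) + a) / (2 * sqrt a))"
      using intc by simp
  qed (rule pw)
  also have "\<dots> = (a + a) / (2 * sqrt a)"
    using intc by (simp add: EE_cnt a_def)
  also have "\<dots> = sqrt a" using a by (simp add: real_div_sqrt)
  finally show ?thesis by (simp add: a_def)
qed

lemma atom:
  assumes "pp p P \<le> 1/4"
  shows "EE (replicate_pmf n p) (\<lambda>xs. sqrt (real (length (filter P xs))))
           \<le> 2 * sqrt 2 * EE (replicate_pmf n p) (\<lambda>xs. \<bar>YY p P n xs\<bar>)"
proof -
  define q where "q = pp p P"
  have q: "0 \<le> q" "q \<le> 1/4" using pp[of p P] assms by (auto simp: q_def)
  define a where "a = real n * q"
  define v where "v = real n * (q * (1 - q))"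
  have a0: "0 \<le> a" using q by (simp add: a_def)
  have va': "v = a * (1 - q)" by (simp add: a_def v_def)
  have "a * (3/4) \<le> a * (1 - q)" using q a0 by (intro mult_left_mono) auto
  moreover have "a * (1 - q) \<le> a * 1" using q a0 by (intro mult_left_mono) auto
  ultimately have va: "3/4 * a \<le> v" "v \<le> a" unfolding va' by (simp_all add: mult.commute)
  have M2: "Mom p P 2 n = v" by (simp add: Mom_2 v_def q_def pp_def)
  have M4: "Mom p P 4 n \<le> v + 3 * v\<^sup>2" using Mom_4[of p P n] by (simp add: v_def q_def pp_def)
  define EA where "EA = EE (replicate_pmf n p) (\<lambda>xs. \<bar>YY p P n xs\<bar>)"
  define ES where "ES = EE (replicate_pmf n p) (\<lambda>xs. sqrt (real (length (filter P xs))))"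
  have ES1: "ES \<le> a" using EE_sqrt_le1[of n p P] by (simp add: ES_def a_def q_def)
  have ES2: "ES \<le> sqrt a" using EE_sqrt_le2 by (simp add: ES_def a_def q_def)
  have s2: "sqrt 2 \<ge> 4/3"
    by (rule real_le_rsqrt) (simp add: power2_eq_square)
  show ?thesis
  proof (cases "v \<ge> 1")
    case True
    define s where "s = sqrt v"
    have s: "s \<ge> 1" "s\<^sup>2 = v" using True by (auto simp: s_def)
    have "3/4 * v / s - Mom p P 4 n / (16 * s ^ 3) \<le> EA"
      unfolding EA_def M2[symmetric] by (rule EE_abs_lower) (use s in simp)
    moreover have "Mom p P 4 n / (16 * s ^ 3) \<le> (v + 3 * v\<^sup>2) / (16 * s ^ 3)"
      using M4 s by (intro divide_right_mono) auto
    moreover have "3/4 * v / s - (v + 3 * v\<^sup>2) / (16 * s ^ 3) = 3/4 * s - 1/(16 * s) - 3/16 * s"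
      using s by (simp add: field_simps power2_eq_square power3_eq_cube flip: s(2))
    moreover have "1/(16 * s) \<le> s / 16"
    proof -
      have "1/(16 * s) \<le> 1/16" using s by (simp add: field_simps)
      also have "\<dots> \<le> s/16" using s by simp
      finally show ?thesis .
    qed
    ultimately have EA: "s / 2 \<le> EA" by linarith
    have "ES \<le> sqrt a" by (rule ES2)
    also have "\<dots> \<le> sqrt (2 * v)" using va by simp
    also have "\<dots> = sqrt 2 * s" by (simp add: s_def real_sqrt_mult)
    also have "\<dots> \<le> sqrt 2 * (2 * EA)" using EA by simp
    finally show ?thesis by (simp add: ES_def EA_def)
  next
    case False
    have "3/4 * Mom p P 2 n / 1 - Mom p P 4 n / (16 * 1 ^ 3) \<le> EA"
      unfolding EA_def by (rule EE_abs_lower) simp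
    then have "3/4 * v - (v + 3 * v\<^sup>2) / 16 \<le> EA" using M2 M4 by (simp add: divide_simps)
    moreover have "v\<^sup>2 \<le> v" using False va a0 by (simp add: power2_eq_square mult_le_cancel_right1)
      (smt (verit) mult_left_le_one_le)
    moreover have "(v + 3 * v\<^sup>2) / 16 = v/16 + 3/16 * v\<^sup>2" by simp
    ultimately have EA: "v / 2 \<le> EA" by linarith
    have "ES \<le> a" by (rule ES1)
    also have "\<dots> \<le> 4/3 * v" using va by simp
    also have "\<dots> \<le> sqrt 2 * v" using s2 va a0 by (intro mult_right_mono) auto
    also have "\<dots> \<le> sqrt 2 * (2 * EA)" using EA by simp
    finally show ?thesis by (simp add: ES_def EA_def)
  qed
qed

end


lemma sqrt_nat_le: "sqrt (real k) \<le> real k"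
proof (rule real_le_lsqrt)
  show "real k \<le> (real k)\<^sup>2" unfolding power2_eq_square
    by (metis of_nat_mult of_nat_le_iff le_square)
qed simp

lemma count_list_filter: "count_list xs j = length (filter (\<lambda>x. x = j) xs)"
  by (induction xs) auto

lemma sum_count_list: "finite A \<Longrightarrow> (\<Sum>j\<in>A. count_list xs j) = length (filter (\<lambda>x. x \<in> A) xs)"
proof (induction xs)
  case (Cons a xs)
  have "(\<Sum>j\<in>A. count_list (a#xs) j) = (\<Sum>j\<in>A. count_list xs j + (if a = j then 1 else 0))"
    by (rule sum.cong) auto
  also have "\<dots> = (\<Sum>j\<in>A. count_list xs j) + (if a \<in> A then 1 else 0)"
    using Cons.prems by (simp add: sum.distrib sum.delta)
  finally show ?case using Cons by simp
qed simp

lemma pmf_summable: "pmf p summable_on UNIV"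
proof (rule nonneg_bdd_above_summable_on)
  show "bdd_above (sum (pmf p) ` {F. F \<subseteq> UNIV \<and> finite F})"
    unfolding bdd_above_def
    by (rule exI[of _ 1]) (auto simp flip: measure_measure_pmf_finite)
qed simp

lemma emp_summable: "emp_measure m xs summable_on UNIV"
proof -
  have "emp_measure m xs summable_on set xs" by simp
  then show ?thesis
    by (subst summable_on_cong_neutral[where T="set xs" and g="emp_measure m xs"]) 
       (auto simp: emp_measure_def)
qed

lemma tv_lower:
  assumes "finite J"
  shows "(\<Sum>j\<in>J. 1/2 * \<bar>emp_measure m xs j - pmf \<mu> j\<bar>) \<le> tv_dist (emp_measure m xs) (pmf \<mu>)"
proof -
  have s: "(\<lambda>j. \<bar>emp_measure m xs j - pmf \<mu> j\<bar>) summable_on UNIV"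
  proof (rule summable_on_comparison_test)
    show "(\<lambda>j. emp_measure m xs j + pmf \<mu> j) summable_on UNIV"
      by (intro summable_on_add emp_summable pmf_summable)
    fix j
    have "0 \<le> emp_measure m xs j" by (simp add: emp_measure_def)
    then show "\<bar>emp_measure m xs j - pmf \<mu> j\<bar> \<le> emp_measure m xs j + pmf \<mu> j"
      using pmf_nonneg[of \<mu> j] by (simp add: abs_le_iff)
  qed auto
  have "(\<Sum>j\<in>J. \<bar>emp_measure m xs j - pmf \<mu> j\<bar>) \<le> (\<Sum>\<^sub>\<infinity>j\<in>UNIV. \<bar>emp_measure m xs j - pmf \<mu> j\<bar>)"
    by (rule finite_sum_le_infsum[OF s assms]) auto
  then show ?thesis unfolding tv_dist_def by (simp add: sum_divide_distrib[symmetric])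
qed

lemma Phi_upper:
  assumes "finite J" "m > 0"
  shows "Phi m (emp_measure m xs) \<le>
     ((\<Sum>j\<in>J. sqrt (real (count_list xs j))) + real (length (filter (\<lambda>x. x \<notin> J) xs))) / real m"
proof -
  have "(\<Sum>\<^sub>\<infinity>j\<in>UNIV. sqrt (emp_measure m xs j)) = (\<Sum>\<^sub>\<infinity>j\<in>set xs. sqrt (emp_measure m xs j))"
    by (rule infsum_cong_neutral) (auto simp: emp_measure_def)
  also have "\<dots> = (\<Sum>j\<in>set xs. sqrt (real (count_list xs j)) / sqrt (real m))"
    by (simp add: emp_measure_def real_sqrt_divide)
  finally have "Phi m (emp_measure m xs) = (\<Sum>j\<in>set xs. sqrt (real (count_list xs j))) / real m"
    using assms by (simp add: Phi_def sum_divide_distrib[symmetric])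
  also have "(\<Sum>j\<in>set xs. sqrt (real (count_list xs j))) =
      (\<Sum>j\<in>set xs \<inter> J. sqrt (real (count_list xs j))) + (\<Sum>j\<in>set xs - J. sqrt (real (count_list xs j)))"
    by (rule sum.Int_Diff) simp
  also have "(\<Sum>j\<in>set xs \<inter> J. sqrt (real (count_list xs j))) \<le> (\<Sum>j\<in>J. sqrt (real (count_list xs j)))"
    by (rule sum_mono2) (auto simp: assms)
  also have "(\<Sum>j\<in>set xs - J. sqrt (real (count_list xs j))) \<le> (\<Sum>j\<in>set xs - J. real (count_list xs j))"
    by (rule sum_mono) (rule sqrt_nat_le)
  also have "(\<Sum>j\<in>set xs - J. real (count_list xs j)) = real (length (filter (\<lambda>x. x \<in> set xs - J) xs))"
    by (simp flip: of_nat_sum add: sum_count_list)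
  also have "filter (\<lambda>x. x \<in> set xs - J) xs = filter (\<lambda>x. x \<notin> J) xs"
    by (rule filter_cong) auto
  finally show ?thesis using assms by (simp add: divide_right_mono)
qed


definition phiJ :: "nat pmf \<Rightarrow> nat \<Rightarrow> real \<Rightarrow> nat \<Rightarrow> nat \<Rightarrow> real" where
  "phiJ \<mu> m K j c = 1/2 * \<bar>real c / real m - pmf \<mu> j\<bar> - K / real m * sqrt (real c)"

definition GG :: "nat pmf \<Rightarrow> nat \<Rightarrow> real \<Rightarrow> nat set \<Rightarrow> nat list \<Rightarrow> real" where
  "GG \<mu> m K J xs = (\<Sum>j\<in>J. phiJ \<mu> m K j (count_list xs j))
                    - K / real m * real (length (filter (\<lambda>x. x \<notin> J) xs))"

lemma GG_det:
  assumes "finite J" "m > 0" "K \<ge> 0"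
  shows "GG \<mu> m K J xs \<le> tv_dist (emp_measure m xs) (pmf \<mu>) - K * Phi m (emp_measure m xs)"
proof -
  have 1: "(\<Sum>j\<in>J. 1/2 * \<bar>emp_measure m xs j - pmf \<mu> j\<bar>) \<le> tv_dist (emp_measure m xs) (pmf \<mu>)"
    by (rule tv_lower[OF assms(1)])
  have 2: "K * Phi m (emp_measure m xs) \<le>
     K * (((\<Sum>j\<in>J. sqrt (real (count_list xs j))) + real (length (filter (\<lambda>x. x \<notin> J) xs))) / real m)"
    by (rule mult_left_mono[OF Phi_upper[OF assms(1,2)] assms(3)])
  have "GG \<mu> m K J xs = (\<Sum>j\<in>J. 1/2 * \<bar>emp_measure m xs j - pmf \<mu> j\<bar>)
      - K * (((\<Sum>j\<in>J. sqrt (real (count_list xs j))) + real (length (filter (\<lambda>x. x \<notin> J) xs))) / real m)"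
    by (simp add: GG_def phiJ_def emp_measure_def sum_subtractf sum_distrib_left sum_divide_distrib
         algebra_simps add_divide_distrib)
  then show ?thesis using 1 2 by linarith
qed

lemma filter_update:
  "i < length xs \<Longrightarrow> real (length (filter P (xs[i:=y]))) =
     real (length (filter P xs)) - (if P (xs!i) then 1 else 0) + (if P y then 1 else 0)"
proof -
  assume i: "i < length xs"
  have "length (filter P (xs[i:=y])) + (if P (xs!i) then 1 else 0) =
        length (filter P xs) + (if P y then 1 else 0)"
    using i
  proof (induction xs arbitrary: i)
    case (Cons a xs) then show ?case by (cases i) auto
  qed simp
  then have "real (length (filter P (xs[i:=y])) + (if P (xs!i) then 1 else 0)) =
        real (length (filter P xs) + (if P y then 1 else 0))"
    by (simp only:)
  then show ?thesis by (auto split: if_splits)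
qed

lemma sqrt_nat_lip: "\<bar>sqrt (real a) - sqrt (real b)\<bar> \<le> \<bar>real a - real b\<bar>"
proof (cases "a = b")
  case False
  then have "a \<ge> 1 \<or> b \<ge> 1" by auto
  then have s: "sqrt (real a) + sqrt (real b) \<ge> 1"
  proof
    assume "a \<ge> 1" then have "1 \<le> sqrt (real a)" by (intro real_sqrt_ge_one) simp
    then show ?thesis by (smt (verit) real_sqrt_ge_zero of_nat_0_le_iff)
  next
    assume "b \<ge> 1" then have "1 \<le> sqrt (real b)" by (intro real_sqrt_ge_one) simp
    then show ?thesis by (smt (verit) real_sqrt_ge_zero of_nat_0_le_iff)
  qed
  have "real a - real b = (sqrt (real a) - sqrt (real b)) * (sqrt (real a) + sqrt (real b))"
    by (simp add: algebra_simps)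
  then have "\<bar>real a - real b\<bar> = \<bar>sqrt (real a) - sqrt (real b)\<bar> * (sqrt (real a) + sqrt (real b))"
    by (simp add: abs_mult)
  moreover have "\<bar>sqrt (real a) - sqrt (real b)\<bar> * 1 \<le> \<bar>sqrt (real a) - sqrt (real b)\<bar> * (sqrt (real a) + sqrt (real b))"
    by (rule mult_left_mono[OF s]) simp
  ultimately show ?thesis by simp
qed simp

lemma phi_lip:
  assumes "m > 0" "K \<ge> 0"
  shows "\<bar>phiJ \<mu> m K j a - phiJ \<mu> m K j b\<bar> \<le> (1 / (2 * real m) + K / real m) * \<bar>real a - real b\<bar>"
proof -
  have 1: "\<bar>1/2 * \<bar>real a / real m - pmf \<mu> j\<bar> - 1/2 * \<bar>real b / real m - pmf \<mu> j\<bar>\<bar>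
        \<le> 1 / (2 * real m) * \<bar>real a - real b\<bar>"
  proof -
    have "\<bar>1/2 * \<bar>real a / real m - pmf \<mu> j\<bar> - 1/2 * \<bar>real b / real m - pmf \<mu> j\<bar>\<bar>
        \<le> 1/2 * \<bar>real a / real m - real b / real m\<bar>"
    proof -
      define A where "A = real a / real m - pmf \<mu> j"
      define B where "B = real b / real m - pmf \<mu> j"
      have "1/2 * \<bar>A\<bar> - 1/2 * \<bar>B\<bar> = 1/2 * (\<bar>A\<bar> - \<bar>B\<bar>)" by (simp only: right_diff_distrib)
      then have "\<bar>1/2 * \<bar>A\<bar> - 1/2 * \<bar>B\<bar>\<bar> = 1/2 * \<bar>\<bar>A\<bar> - \<bar>B\<bar>\<bar>" by (simp only: abs_mult) simp
      also have "\<dots> \<le> 1/2 * \<bar>A - B\<bar>" by (intro mult_left_mono abs_triangle_ineq3) simp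
      also have "A - B = real a / real m - real b / real m" by (simp add: A_def B_def)
      finally show ?thesis by (simp add: A_def B_def)
    qed
    also have "\<dots> = 1 / (2 * real m) * \<bar>real a - real b\<bar>"
      using assms by (simp add: diff_divide_distrib[symmetric] abs_divide)
    finally show ?thesis .
  qed
  have 2: "\<bar>K / real m * sqrt (real a) - K / real m * sqrt (real b)\<bar> \<le> K / real m * \<bar>real a - real b\<bar>"
  proof -
    have "\<bar>K / real m * sqrt (real a) - K / real m * sqrt (real b)\<bar> = K / real m * \<bar>sqrt (real a) - sqrt (real b)\<bar>"
    proof -
      have "K / real m * sqrt (real a) - K / real m * sqrt (real b) = K / real m * (sqrt (real a) - sqrt (real b))"
        by (simp only: right_diff_distrib)
      then show ?thesis using assms by (simp only: abs_mult) simp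
    qed
    also have "\<dots> \<le> K / real m * \<bar>real a - real b\<bar>"
      using assms by (intro mult_left_mono sqrt_nat_lip) auto
    finally show ?thesis .
  qed
  show ?thesis using 1 2 unfolding phiJ_def by (simp add: algebra_simps) linarith
qed


lemma BD_GG:
  assumes "finite J" "m > 0" "K \<ge> 0"
  shows "BD m ((1 + 2 * K) / real m) (GG \<mu> m K J)"
  unfolding BD_def
proof (intro allI impI)
  fix xs :: "nat list" and i y
  assume len: "length xs = m" and i: "i < m"
  define u where "u = xs ! i"
  define L where "L = 1 / (2 * real m) + K / real m"
  define ind :: "bool \<Rightarrow> real" where "ind b = (if b then 1 else 0)" for b
  have ind01: "0 \<le> ind b" "ind b \<le> 1" for b by (auto simp: ind_def)
  have cnt: "real (count_list (xs[i:=y]) j) = real (count_list xs j) - ind (u = j) + ind (y = j)" for j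
    unfolding count_list_filter ind_def u_def using i len
    by (subst filter_update) auto
  have out: "real (length (filter (\<lambda>x. x \<notin> J) (xs[i:=y]))) =
             real (length (filter (\<lambda>x. x \<notin> J) xs)) - ind (u \<notin> J) + ind (y \<notin> J)"
    unfolding ind_def u_def using i len by (subst filter_update) auto
  have ph: "\<bar>phiJ \<mu> m K j (count_list (xs[i:=y]) j) - phiJ \<mu> m K j (count_list xs j)\<bar>
            \<le> L * (ind (y = j) + ind (u = j))" for j
  proof -
    have "\<bar>phiJ \<mu> m K j (count_list (xs[i:=y]) j) - phiJ \<mu> m K j (count_list xs j)\<bar>
          \<le> L * \<bar>real (count_list (xs[i:=y]) j) - real (count_list xs j)\<bar>"
      unfolding L_def by (rule phi_lip[OF assms(2,3)])
    also have "\<bar>real (count_list (xs[i:=y]) j) - real (count_list xs j)\<bar> = \<bar>ind (y = j) - ind (u = j)\<bar>"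
      by (simp add: cnt)
    also have "\<dots> \<le> ind (y = j) + ind (u = j)" using ind01 by (simp add: abs_le_iff)
    finally show ?thesis using assms by (simp add: L_def mult_left_mono)
  qed
  have sJ: "(\<Sum>j\<in>J. ind (y = j) + ind (u = j)) = ind (y \<in> J) + ind (u \<in> J)"
    using assms(1) by (simp add: sum.distrib ind_def sum.delta)
  have L0: "K / real m \<le> L" using assms by (simp add: L_def)
  have L00: "0 \<le> L" using assms by (simp add: L_def)
  have "\<bar>GG \<mu> m K J (xs[i:=y]) - GG \<mu> m K J xs\<bar> =
        \<bar>(\<Sum>j\<in>J. phiJ \<mu> m K j (count_list (xs[i:=y]) j) - phiJ \<mu> m K j (count_list xs j))
          - K / real m * (ind (y \<notin> J) - ind (u \<notin> J))\<bar>"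
    unfolding GG_def out by (simp add: sum_subtractf algebra_simps)
  also have "\<dots> \<le> (\<Sum>j\<in>J. \<bar>phiJ \<mu> m K j (count_list (xs[i:=y]) j) - phiJ \<mu> m K j (count_list xs j)\<bar>)
          + \<bar>K / real m * (ind (y \<notin> J) - ind (u \<notin> J))\<bar>"
    by (rule order_trans[OF abs_triangle_ineq4]) (intro add_mono sum_abs order_refl)
  also have "\<dots> \<le> (\<Sum>j\<in>J. L * (ind (y = j) + ind (u = j))) + L * (ind (y \<notin> J) + ind (u \<notin> J))"
  proof (intro add_mono sum_mono ph)
    have "\<bar>K / real m * (ind (y \<notin> J) - ind (u \<notin> J))\<bar> = K / real m * \<bar>ind (y \<notin> J) - ind (u \<notin> J)\<bar>"
      using assms by (simp add: abs_mult)
    also have "\<dots> \<le> L * (ind (y \<notin> J) + ind (u \<notin> J))"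
      using L0 L00 ind01 assms by (intro mult_mono) (auto simp: abs_le_iff)
    finally show "\<bar>K / real m * (ind (y \<notin> J) - ind (u \<notin> J))\<bar> \<le> L * (ind (y \<notin> J) + ind (u \<notin> J))" .
  qed
  also have "\<dots> = L * (ind (y \<in> J) + ind (u \<in> J) + ind (y \<notin> J) + ind (u \<notin> J))"
  proof -
    have "(\<Sum>j\<in>J. L * (ind (y = j) + ind (u = j))) = L * (ind (y \<in> J) + ind (u \<in> J))"
      by (simp only: sum_distrib_left[symmetric] sJ)
    then show ?thesis by (simp add: algebra_simps)
  qed
  also have "ind (y \<in> J) + ind (u \<in> J) + ind (y \<notin> J) + ind (u \<notin> J) = 2" by (simp add: ind_def)
  also have "L * 2 = (1 + 2 * K) / real m" using assms by (simp add: L_def field_simps)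
  finally show "\<bar>GG \<mu> m K J (xs[i := y]) - GG \<mu> m K J xs\<bar> \<le> (1 + 2 * K) / real m" .
qed


lemma int_nat_fun:
  fixes h :: "nat \<Rightarrow> real"
  assumes "\<And>xs. xs \<in> set_pmf p \<Longrightarrow> g xs \<le> N"
  shows "integrable (measure_pmf p) (\<lambda>xs. h (g xs))"
proof (rule integrable_pmf_bdd[where B="\<Sum>k\<le>N. \<bar>h k\<bar>"])
  fix xs assume "xs \<in> set_pmf p"
  then have "g xs \<in> {..N}" using assms by auto
  then show "\<bar>h (g xs)\<bar> \<le> (\<Sum>k\<le>N. \<bar>h k\<bar>)"
    by (rule member_le_sum[where f="\<lambda>k. \<bar>h k\<bar>", simplified]) auto
qed

lemma cnt_le: "xs \<in> set_pmf (replicate_pmf m \<mu>) \<Longrightarrow> count_list xs j \<le> m"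
  by (auto simp: set_replicate_pmf intro: order_trans[OF count_le_length])

lemma out_le: "xs \<in> set_pmf (replicate_pmf m \<mu>) \<Longrightarrow> length (filter P xs) \<le> m"
  by (auto simp: set_replicate_pmf intro: order_trans[OF length_filter_le])

definition "K0 = 1 / (4 * sqrt 2)"

lemma K0: "K0 > 0" "K0 * (2 * sqrt 2) = 1/2" by (auto simp: K0_def)

lemma EE_phi:
  fixes \<mu> :: "nat pmf"
  assumes m: "m > 0"
  shows "EE (replicate_pmf m \<mu>) (\<lambda>xs. phiJ \<mu> m K0 j (count_list xs j)) \<ge> - (2 * K0 / sqrt (real m)) * pmf \<mu> j"
proof -
  define P where "P = (\<lambda>x::nat. x = j)"
  have ppj: "pp \<mu> P = pmf \<mu> j"
  proof -
    have "{x. P x} = {j}" by (auto simp: P_def)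
    then show ?thesis by (simp add: pp_def measure_pmf_single)
  qed
  have c: "count_list xs j = length (filter P xs)" for xs
    by (simp add: count_list_filter P_def)
  define EA where "EA = EE (replicate_pmf m \<mu>) (\<lambda>xs. \<bar>YY \<mu> P m xs\<bar>)"
  define ES where "ES = EE (replicate_pmf m \<mu>) (\<lambda>xs. sqrt (real (length (filter P xs))))"
  have YYe: "YY \<mu> P m xs = real (length (filter P xs)) - real m * pmf \<mu> j" for xs
    by (simp add: YY_def Yc_def ppj)
  have fe: "(\<lambda>xs. phiJ \<mu> m K0 j (count_list xs j)) =
      (\<lambda>xs. 1 / (2 * real m) * \<bar>YY \<mu> P m xs\<bar> - K0 / real m * sqrt (real (length (filter P xs))))"
  proof
    fix xs
    have "real (length (filter P xs)) / real m - pmf \<mu> j = (real (length (filter P xs)) - real m * pmf \<mu> j) / real m"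
      using m by (simp add: field_simps)
    then show "phiJ \<mu> m K0 j (count_list xs j) =
       1 / (2 * real m) * \<bar>YY \<mu> P m xs\<bar> - K0 / real m * sqrt (real (length (filter P xs)))"
      unfolding phiJ_def c YYe by (simp add: abs_divide)
  qed
  have i1: "integrable (measure_pmf (replicate_pmf m \<mu>)) (\<lambda>xs. \<bar>YY \<mu> P m xs\<bar>)"
    unfolding YYe by (rule int_nat_fun[where h="\<lambda>k. \<bar>real k - real m * pmf \<mu> j\<bar>"]) (rule out_le)
  have i2: "integrable (measure_pmf (replicate_pmf m \<mu>)) (\<lambda>xs. sqrt (real (length (filter P xs))))"
    by (rule int_nat_fun[where h="\<lambda>k. sqrt (real k)"]) (rule out_le)
  have EE: "EE (replicate_pmf m \<mu>) (\<lambda>xs. phiJ \<mu> m K0 j (count_list xs j)) = 1 / (2 * real m) * EA - K0 / real m * ES"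
    unfolding fe EA_def ES_def using i1 i2 by simp
  have EA0: "EA \<ge> 0" unfolding EA_def by (rule integral_nonneg_AE) auto
  show ?thesis
  proof (cases "pmf \<mu> j \<le> 1/4")
    case True
    then have "ES \<le> 2 * sqrt 2 * EA" unfolding ES_def EA_def by (intro atom) (simp add: ppj)
    then have "K0 / real m * ES \<le> K0 / real m * (2 * sqrt 2 * EA)"
      using K0 m by (intro mult_left_mono) auto
    also have "\<dots> = 1 / (2 * real m) * EA" using K0(2) m
      by (simp add: field_simps)
    finally have "0 \<le> EE (replicate_pmf m \<mu>) (\<lambda>xs. phiJ \<mu> m K0 j (count_list xs j))" unfolding EE by simp
    moreover have "0 \<le> 2 * K0 / sqrt (real m) * pmf \<mu> j" using K0 by simp
    ultimately show ?thesis by linarith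
  next
    case False
    have "ES \<le> sqrt (real m * pp \<mu> P)" unfolding ES_def by (rule EE_sqrt_le2)
    also have "\<dots> = sqrt (real m) * sqrt (pmf \<mu> j)" by (simp add: ppj real_sqrt_mult)
    also have "sqrt (pmf \<mu> j) \<le> 2 * pmf \<mu> j"
    proof -
      have "sqrt (pmf \<mu> j) * 1 \<le> sqrt (pmf \<mu> j) * (2 * sqrt (pmf \<mu> j))"
      proof (rule mult_left_mono)
        have "sqrt (1/4) \<le> sqrt (pmf \<mu> j)" using False by simp
        moreover have "sqrt (1/4) = (1/2::real)" by (rule real_sqrt_unique) (auto simp: power2_eq_square)
        ultimately show "1 \<le> 2 * sqrt (pmf \<mu> j)" by simp
      qed simp
      moreover have "sqrt (pmf \<mu> j) * (2 * sqrt (pmf \<mu> j)) = 2 * (sqrt (pmf \<mu> j) * sqrt (pmf \<mu> j))"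
        by simp
      moreover have "sqrt (pmf \<mu> j) * sqrt (pmf \<mu> j) = pmf \<mu> j"
        by (simp add: real_sqrt_mult[symmetric])
      ultimately show ?thesis by simp
    qed
    finally have ES: "ES \<le> sqrt (real m) * (2 * pmf \<mu> j)" by (simp add: mult_left_mono)
    have "K0 / real m * ES \<le> K0 / real m * (sqrt (real m) * (2 * pmf \<mu> j))"
      using ES K0 m by (intro mult_left_mono) auto
    also have "\<dots> = 2 * K0 / sqrt (real m) * pmf \<mu> j"
      using m by (simp add: field_simps)
    finally have "K0 / real m * ES \<le> 2 * K0 / sqrt (real m) * pmf \<mu> j" .
    moreover have "0 \<le> 1 / (2 * real m) * EA" using EA0 by simp
    ultimately show ?thesis unfolding EE by linarith
  qed
qed

lemma EE_GG:
  fixes \<mu> :: "nat pmf"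
  assumes m: "m > 0" and J: "finite J" and tail: "measure_pmf.prob \<mu> (- J) \<le> 1 / sqrt (real m)"
  shows "EE (replicate_pmf m \<mu>) (GG \<mu> m K0 J) \<ge> - 3 * K0 / sqrt (real m)"
proof -
  define M where "M = replicate_pmf m \<mu>"
  have ip: "integrable (measure_pmf M) (\<lambda>xs. phiJ \<mu> m K0 j (count_list xs j))" for j
    unfolding M_def by (rule int_nat_fun[where h="phiJ \<mu> m K0 j"]) (rule cnt_le)
  have io: "integrable (measure_pmf M) (\<lambda>xs. real (length (filter (\<lambda>x. x \<notin> J) xs)))"
    unfolding M_def by (rule int_nat_fun[where h="real"]) (rule out_le)
  have "EE M (GG \<mu> m K0 J) = (\<Sum>j\<in>J. EE M (\<lambda>xs. phiJ \<mu> m K0 j (count_list xs j)))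
        - K0 / real m * EE M (\<lambda>xs. real (length (filter (\<lambda>x. x \<notin> J) xs)))"
    unfolding GG_def[abs_def]
    by (subst Bochner_Integration.integral_diff)
       (auto intro!: Bochner_Integration.integrable_sum ip io simp: Bochner_Integration.integral_sum[OF ip])
  also have "EE M (\<lambda>xs. real (length (filter (\<lambda>x. x \<notin> J) xs))) = real m * measure_pmf.prob \<mu> (- J)"
    unfolding M_def EE_cnt pp_def by (simp add: Compl_eq)
  finally have e: "EE M (GG \<mu> m K0 J) = (\<Sum>j\<in>J. EE M (\<lambda>xs. phiJ \<mu> m K0 j (count_list xs j)))
        - K0 * measure_pmf.prob \<mu> (- J)" using m by simp
  have "(\<Sum>j\<in>J. - (2 * K0 / sqrt (real m)) * pmf \<mu> j) \<le> (\<Sum>j\<in>J. EE M (\<lambda>xs. phiJ \<mu> m K0 j (count_list xs j)))"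
    unfolding M_def by (intro sum_mono EE_phi m)
  moreover have "(\<Sum>j\<in>J. - (2 * K0 / sqrt (real m)) * pmf \<mu> j) = - (2 * K0 / sqrt (real m)) * measure_pmf.prob \<mu> J"
    using J by (simp only: sum_distrib_left[symmetric] measure_measure_pmf_finite)
  moreover have "- (2 * K0 / sqrt (real m)) * 1 \<le> - (2 * K0 / sqrt (real m)) * measure_pmf.prob \<mu> J"
    using K0 by (intro mult_left_mono_neg) auto
  moreover have "K0 * measure_pmf.prob \<mu> (- J) \<le> K0 * (1 / sqrt (real m))"
    using K0 tail by (intro mult_left_mono) auto
  ultimately have "- (2 * K0 / sqrt (real m)) - K0 * (1 / sqrt (real m)) \<le> EE M (GG \<mu> m K0 J)"
    unfolding e by linarith
  then show ?thesis by (simp add: M_def)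
qed


lemma exists_J:
  fixes \<mu> :: "nat pmf" and e :: real
  assumes "e > 0"
  shows "\<exists>N. measure_pmf.prob \<mu> (- {..<N}) \<le> e"
proof -
  have "(\<lambda>N. measure_pmf.prob \<mu> {..<N}) \<longlonglongrightarrow> measure_pmf.prob \<mu> (\<Union>N. {..<N})"
    by (rule measure_pmf.finite_Lim_measure_incseq) (auto simp: incseq_def)
  moreover have "(\<Union>N. {..<N::nat}) = UNIV" by auto
  ultimately have "(\<lambda>N. measure_pmf.prob \<mu> {..<N}) \<longlonglongrightarrow> 1" by simp
  then have "eventually (\<lambda>N. measure_pmf.prob \<mu> {..<N} > 1 - e) sequentially"
    using assms by (intro order_tendstoD) auto
  then obtain N where N: "measure_pmf.prob \<mu> {..<N} > 1 - e" by (auto simp: eventually_sequentially)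
  have "measure_pmf.prob \<mu> (- {..<N}) = 1 - measure_pmf.prob \<mu> {..<N}"
    using measure_pmf.prob_compl[of "{..<N}" \<mu>] by (simp add: Compl_eq_Diff_UNIV)
  then show ?thesis using N by (intro exI[of _ N]) simp
qed

lemma ln2_ge: "ln (2::real) \<ge> 1/4"
proof -
  have "exp (1/4::real) \<le> 1 + 1/4 + (1/4)\<^sup>2" by (rule exp_bound) auto
  also have "\<dots> \<le> 2" by (simp add: power2_eq_square)
  finally have "exp (1/4::real) \<le> 2" .
  then have "ln (exp (1/4::real)) \<le> ln 2" by (subst ln_le_cancel_iff) auto
  then show ?thesis by simp
qed

lemma K0_le: "K0 \<le> 1/5"
proof -
  have "sqrt 2 \<ge> (5/4::real)" by (rule real_le_rsqrt) (simp add: power2_eq_square)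
  then show ?thesis unfolding K0_def by (simp add: field_simps)
qed

lemma numeric:
  fixes \<delta> :: real and m :: nat
  assumes d: "0 < \<delta>" "\<delta> < 1" and m: "m > 0"
  defines "L \<equiv> ln (2 / \<delta>)"
  defines "s \<equiv> 3 * sqrt (L / real m) - 3 * K0 / sqrt (real m)"
  defines "c \<equiv> (1 + 2 * K0) / real m"
  shows "s > 0" "c > 0" "exp (- 2 * s\<^sup>2 / (real m * c\<^sup>2)) \<le> \<delta> / 2"
proof -
  have "ln 2 \<le> L" unfolding L_def using d by (subst ln_le_cancel_iff) (auto simp: field_simps)
  then have L: "L \<ge> 1/4" using ln2_ge by linarith
  define w where "w = sqrt L"
  have w: "w \<ge> 1/2" unfolding w_def by (rule real_le_rsqrt) (use L in \<open>simp add: power2_eq_square\<close>)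
  have wL: "w\<^sup>2 = L" using L by (simp add: w_def)
  have sm: "sqrt (real m) > 0" using m by simp
  have se: "s = (3 * w - 3 * K0) / sqrt (real m)"
    unfolding s_def w_def by (simp add: real_sqrt_divide diff_divide_distrib)
  have K: "0 < K0" "K0 \<le> 1/5" using K0 K0_le by auto
  have pos: "3 * w - 3 * K0 \<ge> 9/5 * w" using K w by linarith
  have w0: "w > 0" using w by simp
  show s0: "s > 0" unfolding se using pos w0 sm by (intro divide_pos_pos) linarith+
  show c0: "c > 0" unfolding c_def using K m by simp
  have "2 * s\<^sup>2 / (real m * c\<^sup>2) = 2 * (3 * w - 3 * K0)\<^sup>2 / (1 + 2 * K0)\<^sup>2"
  proof -
    define A where "A = 3 * w - 3 * K0"
    define B where "B = 1 + 2 * K0"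
    have s2: "s\<^sup>2 = A\<^sup>2 / real m" unfolding se A_def[symmetric] using m by (simp add: power_divide)
    have c2: "real m * c\<^sup>2 = B\<^sup>2 / real m" unfolding c_def B_def[symmetric] using m
      by (simp add: power_divide power2_eq_square)
    have B: "B\<^sup>2 > 0" using K by (simp add: B_def)
    show ?thesis unfolding s2 c2 A_def[symmetric] B_def[symmetric] using m B by (simp add: field_simps)
  qed
  also have "\<dots> \<ge> L"
  proof -
    have "(9/5 * w)\<^sup>2 \<le> (3 * w - 3 * K0)\<^sup>2" using pos w0 by (intro power_mono) auto
    moreover have "(1 + 2 * K0)\<^sup>2 \<le> (7/5)\<^sup>2" using K by (intro power_mono) auto
    moreover have "(1 + 2 * K0)\<^sup>2 > 0" using K by simp
    ultimately have "L * (1 + 2 * K0)\<^sup>2 \<le> 2 * (3 * w - 3 * K0)\<^sup>2"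
    proof -
      assume a1: "(9/5 * w)\<^sup>2 \<le> (3 * w - 3 * K0)\<^sup>2" and a2: "(1 + 2 * K0)\<^sup>2 \<le> (7/5)\<^sup>2"
      have "L * (1 + 2 * K0)\<^sup>2 \<le> L * (7/5)\<^sup>2" using a2 L by (intro mult_left_mono) auto
      also have "\<dots> = 49/25 * w\<^sup>2" using wL by (simp add: power2_eq_square)
      also have "\<dots> \<le> 2 * (9/5 * w)\<^sup>2" by (simp add: power2_eq_square)
      also have "\<dots> \<le> 2 * (3 * w - 3 * K0)\<^sup>2" using a1 by simp
      finally show ?thesis .
    qed
    then show ?thesis using \<open>(1 + 2 * K0)\<^sup>2 > 0\<close> by (simp add: le_divide_eq)
  qed
  finally have "- 2 * s\<^sup>2 / (real m * c\<^sup>2) \<le> - L" by simp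
  then have "exp (- 2 * s\<^sup>2 / (real m * c\<^sup>2)) \<le> exp (- L)" by simp
  also have "exp (- L) = \<delta> / 2" unfolding L_def using d by (simp add: exp_minus)
  finally show "exp (- 2 * s\<^sup>2 / (real m * c\<^sup>2)) \<le> \<delta> / 2" .
qed


theorem theorem2:
  fixes m :: nat and \<delta> :: real and \<mu> :: "nat pmf"
  assumes "m \<ge> 1"
    and "0 < \<delta>" and "\<delta> < 1"
    and "0 \<notin> set_pmf \<mu>"
  shows "measure_pmf.prob (replicate_pmf m \<mu>)
           {xs. tv_dist (emp_measure m xs) (pmf \<mu>)
                  \<ge> 1 / (4 * sqrt 2) * Phi m (emp_measure m xs)
                    - 3 * sqrt (ln (2 / \<delta>) / real m)}
         \<ge> 1 - \<delta>"
proof -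
  have m: "m > 0" using assms(1) by simp
  have d: "0 < \<delta>" "\<delta> < 1" using assms by auto
  obtain N where tail: "measure_pmf.prob \<mu> (- {..<N}) \<le> 1 / sqrt (real m)"
    using exists_J[of "1 / sqrt (real m)" \<mu>] m by auto
  define J where "J = {..<N}"
  have J: "finite J" by (simp add: J_def)
  define G where "G = GG \<mu> m K0 J"
  define M where "M = replicate_pmf m \<mu>"
  define L where "L = ln (2 / \<delta>)"
  define s where "s = 3 * sqrt (L / real m) - 3 * K0 / sqrt (real m)"
  define c where "c = (1 + 2 * K0) / real m"
  define t where "t = 3 * sqrt (L / real m)"
  have num: "s > 0" "c > 0" "exp (- 2 * s\<^sup>2 / (real m * c\<^sup>2)) \<le> \<delta> / 2"
    using numeric[OF d m] unfolding s_def c_def L_def by auto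
  have EG: "EE M G \<ge> - 3 * K0 / sqrt (real m)"
    unfolding M_def G_def by (rule EE_GG[OF m J]) (use tail in \<open>simp add: J_def\<close>)
  have bd: "BD m c (\<lambda>xs. - G xs)"
    unfolding c_def G_def by (intro BD_neg BD_GG J m) (use K0 in auto)
  have tl: "measure_pmf.prob M {xs. - G xs - EE M (\<lambda>xs. - G xs) \<ge> s} \<le> \<delta> / 2"
    using mcd_tail[OF bd m num(2) num(1), of \<mu>] num(3) unfolding M_def by linarith
  have "{xs. G xs < - t} \<subseteq> {xs. - G xs - EE M (\<lambda>xs. - G xs) \<ge> s}"
  proof
    fix xs assume "xs \<in> {xs. G xs < - t}"
    then have "G xs < - t" by simp
    moreover have "EE M (\<lambda>xs. - G xs) = - EE M G" by simp
    ultimately show "xs \<in> {xs. - G xs - EE M (\<lambda>xs. - G xs) \<ge> s}"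
      using EG unfolding s_def t_def by simp
  qed
  then have "measure_pmf.prob M {xs. G xs < - t} \<le> measure_pmf.prob M {xs. - G xs - EE M (\<lambda>xs. - G xs) \<ge> s}"
    by (intro measure_pmf.finite_measure_mono) auto
  then have lt: "measure_pmf.prob M {xs. G xs < - t} \<le> \<delta> / 2" using tl by linarith
  have "measure_pmf.prob M {xs. G xs \<ge> - t} = measure_pmf.prob M (UNIV - {xs. G xs < - t})"
    by (intro arg_cong[where f="measure_pmf.prob M"]) auto
  also have "\<dots> = 1 - measure_pmf.prob M {xs. G xs < - t}"
    using measure_pmf.prob_compl[of "{xs. G xs < - t}" M] by simp
  finally have ge: "measure_pmf.prob M {xs. G xs \<ge> - t} \<ge> 1 - \<delta> / 2" using lt by linarith
  have "{xs. G xs \<ge> - t} \<inter> set_pmf M \<subseteq>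
      {xs. tv_dist (emp_measure m xs) (pmf \<mu>)
                  \<ge> 1 / (4 * sqrt 2) * Phi m (emp_measure m xs) - 3 * sqrt (ln (2 / \<delta>) / real m)}"
  proof
    fix xs assume "xs \<in> {xs. G xs \<ge> - t} \<inter> set_pmf M"
    then have "G xs \<ge> - t" by auto
    moreover have "G xs \<le> tv_dist (emp_measure m xs) (pmf \<mu>) - K0 * Phi m (emp_measure m xs)"
      unfolding G_def by (rule GG_det[OF J m]) (use K0 in simp)
    ultimately show "xs \<in> {xs. tv_dist (emp_measure m xs) (pmf \<mu>)
                  \<ge> 1 / (4 * sqrt 2) * Phi m (emp_measure m xs) - 3 * sqrt (ln (2 / \<delta>) / real m)}"
      unfolding t_def L_def K0_def by simp
  qed
  then have "measure_pmf.prob M ({xs. G xs \<ge> - t} \<inter> set_pmf M) \<le>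
      measure_pmf.prob M {xs. tv_dist (emp_measure m xs) (pmf \<mu>)
                  \<ge> 1 / (4 * sqrt 2) * Phi m (emp_measure m xs) - 3 * sqrt (ln (2 / \<delta>) / real m)}"
    by (intro measure_pmf.finite_measure_mono) auto
  moreover have "measure_pmf.prob M ({xs. G xs \<ge> - t} \<inter> set_pmf M) = measure_pmf.prob M {xs. G xs \<ge> - t}"
    by (rule measure_Int_set_pmf)
  ultimately show ?thesis using ge d unfolding M_def by linarith
qed


end
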